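(* Let $\lambda\in(0,1)$ and let $G$ be a finite simple connected graph with $n$ vertices. Then $$\frac{\lambda^{n}-\lambda}{\lambda-1}\;\le\; mc^{e}_{\lambda}(G).$$ The lower bound is attained for the path $P_n$, at an end-vertex.
   Context: $d(u,v)$ denotes graph distance and $[u]$ the set of neighbours of $u$. For vertices $k,l$, $s^{kl}$ is the number of shortest $k$–$l$ paths and, for an edge $uv$, $s^{kl}_{uv}$ is the number of those passing through the edge $uv$. The exponential edge betweenness of an edge $uv$ is $b^{e}_{\lambda}(uv)=\sum_{\{k,l\}}\frac{s^{kl}_{uv}}{s^{kl}}\lambda^{d(k,l)}$ over all unordered pairs $\{k,l\}$ of distinct vertices; the exponential betweenness centrality of a vertex $u$ is $c^{e}_{\lambda}(u)=\sum_{v\in[u]}b^{e}_{\lambda}(uv)$; and $mc^{e}_{\lambda}(G)=\min\{c^{e}_{\lambda}(u):u\in V(G)\}$. *)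

theory Defs
  imports Main "HOL-Library.Cardinality" Complex_Main
begin

definition simple_graph :: "'a set \<Rightarrow> ('a \<Rightarrow> 'a \<Rightarrow> bool) \<Rightarrow> bool" where
  "simple_graph V E \<longleftrightarrow> finite V \<and> (\<forall>u v. E u v \<longrightarrow> u \<in> V \<and> v \<in> V)
     \<and> (\<forall>u v. E u v \<longrightarrow> E v u) \<and> (\<forall>u. \<not> E u u)"

definition walk :: "'a set \<Rightarrow> ('a \<Rightarrow> 'a \<Rightarrow> bool) \<Rightarrow> 'a list \<Rightarrow> bool" where
  "walk V E p \<longleftrightarrow> p \<noteq> [] \<and> set p \<subseteq> V \<and> (\<forall>i < length p - 1. E (p ! i) (p ! Suc i))"

definition walks_betw :: "'a set \<Rightarrow> ('a \<Rightarrow> 'a \<Rightarrow> bool) \<Rightarrow> 'a \<Rightarrow> 'a \<Rightarrow> 'a list set" where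
  "walks_betw V E k l = {p. walk V E p \<and> hd p = k \<and> last p = l}"

definition connected_graph :: "'a set \<Rightarrow> ('a \<Rightarrow> 'a \<Rightarrow> bool) \<Rightarrow> bool" where
  "connected_graph V E \<longleftrightarrow> V \<noteq> {} \<and> (\<forall>k\<in>V. \<forall>l\<in>V. walks_betw V E k l \<noteq> {})"

definition gdist :: "'a set \<Rightarrow> ('a \<Rightarrow> 'a \<Rightarrow> bool) \<Rightarrow> 'a \<Rightarrow> 'a \<Rightarrow> nat" where
  "gdist V E k l = (LEAST m. \<exists>p \<in> walks_betw V E k l. length p = Suc m)"

definition shortest_paths :: "'a set \<Rightarrow> ('a \<Rightarrow> 'a \<Rightarrow> bool) \<Rightarrow> 'a \<Rightarrow> 'a \<Rightarrow> 'a list set" where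
  "shortest_paths V E k l = {p \<in> walks_betw V E k l. length p = Suc (gdist V E k l)}"

definition uses_edge :: "'a list \<Rightarrow> 'a \<Rightarrow> 'a \<Rightarrow> bool" where
  "uses_edge p u v \<longleftrightarrow> (\<exists>i < length p - 1.
      (p ! i = u \<and> p ! Suc i = v) \<or> (p ! i = v \<and> p ! Suc i = u))"

definition nsp :: "'a set \<Rightarrow> ('a \<Rightarrow> 'a \<Rightarrow> bool) \<Rightarrow> 'a \<Rightarrow> 'a \<Rightarrow> nat" where
  "nsp V E k l = card (shortest_paths V E k l)"

definition nsp_edge :: "'a set \<Rightarrow> ('a \<Rightarrow> 'a \<Rightarrow> bool) \<Rightarrow> 'a \<Rightarrow> 'a \<Rightarrow> 'a \<Rightarrow> 'a \<Rightarrow> nat" where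
  "nsp_edge V E k l u v = card {p \<in> shortest_paths V E k l. uses_edge p u v}"

text \<open>Exponential edge betweenness: sum over unordered pairs {k,l} of distinct vertices,
  each unordered pair represented once as k < l.\<close>
definition exp_edge_betw :: "'a::linorder set \<Rightarrow> ('a \<Rightarrow> 'a \<Rightarrow> bool) \<Rightarrow> real \<Rightarrow> 'a \<Rightarrow> 'a \<Rightarrow> real" where
  "exp_edge_betw V E lam u v =
     (\<Sum>(k,l) \<in> {(k,l). k \<in> V \<and> l \<in> V \<and> k < l}.
        real (nsp_edge V E k l u v) / real (nsp V E k l) * lam ^ gdist V E k l)"

definition exp_betw_centrality :: "'a::linorder set \<Rightarrow> ('a \<Rightarrow> 'a \<Rightarrow> bool) \<Rightarrow> real \<Rightarrow> 'a \<Rightarrow> real" where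
  "exp_betw_centrality V E lam u = (\<Sum>v \<in> {v \<in> V. E u v}. exp_edge_betw V E lam u v)"

definition min_exp_betw_centrality :: "'a::linorder set \<Rightarrow> ('a \<Rightarrow> 'a \<Rightarrow> bool) \<Rightarrow> real \<Rightarrow> real" where
  "min_exp_betw_centrality V E lam = Min (exp_betw_centrality V E lam ` V)"

definition path_adj :: "nat \<Rightarrow> nat \<Rightarrow> bool" where
  "path_adj i j \<longleftrightarrow> i = Suc j \<or> j = Suc i"

end

theory Submission
  imports Defs
begin

lemma walk_single[simp]: "walk V E [x] \<longleftrightarrow> x \<in> V"
  by (auto simp: walk_def)

lemma walk_Cons2[simp]: "walk V E (x#y#xs) \<longleftrightarrow> x \<in> V \<and> E x y \<and> walk V E (y#xs)"
  unfolding walk_def by (auto simp: All_less_Suc2)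

lemma walk_append_tl:
  assumes "walk V E p" "walk V E q" "last p = hd q"
  shows "walk V E (p @ tl q)"
  using assms
proof (induction p)
  case Nil then show ?case by (simp add: walk_def)
next
  case (Cons x xs)
  show ?case
  proof (cases xs)
    case Nil
    then show ?thesis using Cons.prems by (cases q) auto
  next
    case (Cons y ys)
    then show ?thesis using Cons.prems Cons.IH by auto
  qed
qed

lemma walk_take: "walk V E p \<Longrightarrow> 0 < m \<Longrightarrow> walk V E (take m p)"
  unfolding walk_def by (auto dest: in_set_takeD)

lemma walk_drop: "walk V E p \<Longrightarrow> m < length p \<Longrightarrow> walk V E (drop m p)"
  unfolding walk_def by (auto dest: in_set_dropD simp: add.commute[of m])

lemma walk_rev:
  assumes sym: "\<forall>u v. E u v \<longrightarrow> E v u" and w: "walk V E p"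
  shows "walk V E (rev p)"
  unfolding walk_def
proof (intro conjI allI impI)
  show "rev p \<noteq> []" "set (rev p) \<subseteq> V" using w by (auto simp: walk_def)
  fix i assume i: "i < length (rev p) - 1"
  define j where "j = length p - 2 - i"
  have j: "j < length p - 1" using i by (simp add: j_def)
  have "E (p ! j) (p ! Suc j)" using w j by (auto simp: walk_def)
  moreover have "rev p ! i = p ! Suc j" "rev p ! Suc i = p ! j"
    using i by (auto simp: rev_nth j_def Suc_diff_Suc numeral_2_eq_2)
  ultimately show "E (rev p ! i) (rev p ! Suc i)" using sym by auto
qed

lemma walk_upt: "k \<le> l \<Longrightarrow> l < n \<Longrightarrow> walk {0..<n} path_adj [k..<Suc l]"
  unfolding walk_def path_adj_def by (auto simp del: upt_Suc simp: nth_upt)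

lemma walk_hd_last_len: "p \<in> walks_betw V E k l \<Longrightarrow> k \<noteq> l \<Longrightarrow> length p \<ge> 2"
  unfolding walks_betw_def walk_def
  by (cases p; cases "tl p") auto

lemma gdist_ex:
  assumes "walks_betw V E k l \<noteq> {}"
  shows "\<exists>p\<in>walks_betw V E k l. length p = Suc (gdist V E k l)"
proof -
  obtain p where p: "p \<in> walks_betw V E k l" using assms by auto
  then have "length p = Suc (length p - 1)" by (cases p) (auto simp: walks_betw_def walk_def)
  with p have "\<exists>m. \<exists>p \<in> walks_betw V E k l. length p = Suc m" by blast
  then show ?thesis unfolding gdist_def by (rule LeastI_ex)
qed

lemma gdist_le: "p \<in> walks_betw V E k l \<Longrightarrow> gdist V E k l \<le> length p - 1"
proof -
  assume p: "p \<in> walks_betw V E k l"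
  then have "length p = Suc (length p - 1)" by (cases p) (auto simp: walks_betw_def walk_def)
  then show ?thesis unfolding gdist_def by (intro Least_le) (use p in metis)
qed

lemma gdist_self: "k \<in> V \<Longrightarrow> gdist V E k k = 0"
  using gdist_le[of "[k]" V E k k] by (simp add: walks_betw_def)

lemma gdist_pos: "walks_betw V E k l \<noteq> {} \<Longrightarrow> k \<noteq> l \<Longrightarrow> gdist V E k l \<ge> 1"
  using gdist_ex[of V E k l] walk_hd_last_len[of _ V E k l] by fastforce

lemma gdist_sym:
  assumes sym: "\<forall>u v. E u v \<longrightarrow> E v u"
  shows "gdist V E k l = gdist V E l k"
proof -
  have "\<And>k l m. (\<exists>p \<in> walks_betw V E k l. length p = Suc m) \<Longrightarrow> (\<exists>p \<in> walks_betw V E l k. length p = Suc m)"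
  proof -
    fix k l m assume "\<exists>p \<in> walks_betw V E k l. length p = Suc m"
    then obtain p where "p \<in> walks_betw V E k l" "length p = Suc m" by blast
    then show "\<exists>p \<in> walks_betw V E l k. length p = Suc m"
      by (intro bexI[of _ "rev p"]) (auto simp: walks_betw_def walk_rev[OF sym] hd_rev last_rev)
  qed
  then have "\<And>m. (\<exists>p \<in> walks_betw V E k l. length p = Suc m) = (\<exists>p \<in> walks_betw V E l k. length p = Suc m)"
    by blast
  then show ?thesis unfolding gdist_def by simp
qed

lemma finite_sp: "finite V \<Longrightarrow> finite (shortest_paths V E k l)"
  by (rule finite_subset[OF _ finite_lists_length_eq[of V "Suc (gdist V E k l)"]])
     (auto simp: shortest_paths_def walks_betw_def walk_def)

lemma nsp_pos: "finite V \<Longrightarrow> walks_betw V E k l \<noteq> {} \<Longrightarrow> nsp V E k l > 0"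
  unfolding nsp_def using finite_sp gdist_ex[of V E k l]
  by (auto simp: card_gt_0_iff shortest_paths_def)

lemma gdist_prefix:
  assumes p: "p \<in> shortest_paths V E k l" and m: "m \<le> gdist V E k l"
  shows "gdist V E k (p ! m) = m" and "p ! m \<in> V"
proof -
  have pw: "walk V E p" "hd p = k" "last p = l" "length p = Suc (gdist V E k l)"
    using p by (auto simp: shortest_paths_def walks_betw_def)
  have mlt: "m < length p" using pw m by simp
  have lt: "last (take (Suc m) p) = p ! m"
  proof -
    have "take (Suc m) p \<noteq> []" using mlt by (auto simp: take_eq_Nil)
    then show ?thesis using mlt by (auto simp: last_conv_nth min_def intro: arg_cong[of _ _ "nth p"])
  qed
  have tw: "take (Suc m) p \<in> walks_betw V E k (p ! m)"
    using pw mlt walk_take[of V E p "Suc m"] lt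
    by (auto simp: walks_betw_def take_eq_Nil last_conv_nth min_def)
  have le: "gdist V E k (p ! m) \<le> m" using gdist_le[OF tw] mlt by simp
  show "p ! m \<in> V" using pw mlt by (auto simp: walk_def)
  show "gdist V E k (p ! m) = m"
  proof (rule ccontr)
    assume "gdist V E k (p ! m) \<noteq> m"
    then have lt: "gdist V E k (p ! m) < m" using le by simp
    obtain q where q: "q \<in> walks_betw V E k (p ! m)" "length q = Suc (gdist V E k (p ! m))"
      using gdist_ex[of V E k "p ! m"] tw by blast
    have dw: "walk V E (drop m p)" using walk_drop[OF pw(1) mlt] .
    have "walk V E (q @ tl (drop m p))"
      using q dw mlt by (intro walk_append_tl) (auto simp: walks_betw_def hd_drop_conv_nth)
    moreover have "hd (q @ tl (drop m p)) = k" using q by (auto simp: walks_betw_def walk_def)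
    moreover have "last (q @ tl (drop m p)) = l"
    proof (cases "tl (drop m p) = []")
      case True
      then have "length (drop m p) = 1" using mlt by (cases "drop m p") auto
      then have "Suc m = length p" using mlt by simp
      then have "p ! m = l" using pw by (metis diff_Suc_1 last_conv_nth list.size(3) old.nat.distinct(1))
      then show ?thesis using q True by (auto simp: walks_betw_def)
    next
      case False
      then show ?thesis using pw mlt by (simp add: last_tl)
    qed
    ultimately have w: "q @ tl (drop m p) \<in> walks_betw V E k l" by (simp add: walks_betw_def)
    have "length (q @ tl (drop m p)) = Suc (gdist V E k (p ! m)) + (length p - Suc m)"
      using q mlt by simp
    then have "gdist V E k l \<le> gdist V E k (p ! m) + (length p - Suc m)"
      using gdist_le[OF w] by simp
    then show False using lt pw mlt by simp
  qed
qed



lemma sum_pow_Suc: "(\<Sum>i=1..Suc n. (lam::real) ^ i) = (\<Sum>i=1..n. lam ^ i) + lam ^ Suc n"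
  by simp

lemma level_sum:
  fixes lam :: real
  assumes "finite S" "\<forall>s\<in>S. f s \<ge> 1"
    "\<forall>s\<in>S. \<forall>m. 1 \<le> m \<and> m \<le> f s \<longrightarrow> (\<exists>t\<in>S. f t = m)"
    "0 \<le> lam" "lam \<le> 1"
  shows "(\<Sum>i=1..card S. lam ^ i) \<le> (\<Sum>s\<in>S. lam ^ f s)"
  using assms
proof (induction "card S" arbitrary: S)
  case 0
  then show ?case by simp
next
  case (Suc c)
  have ne: "S \<noteq> {}" using Suc.hyps(2) by auto
  have "Max (f ` S) \<in> f ` S" using Suc.prems(1) ne by (intro Max_in) auto
  then obtain s where s1: "s \<in> S" "f s = Max (f ` S)" by auto
  have s: "s \<in> S" "\<forall>t\<in>S. f t \<le> f s"
    using s1 Suc.prems(1) by auto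
  define S' where "S' = S - {s}"
  have cS': "c = card S'" using Suc.hyps(2) s Suc.prems(1) by (simp add: S'_def)
  have h3: "\<forall>x\<in>S'. \<forall>m. 1 \<le> m \<and> m \<le> f x \<longrightarrow> (\<exists>t\<in>S'. f t = m)"
  proof (intro ballI allI impI)
    fix x m assume x: "x \<in> S'" and m: "1 \<le> m \<and> m \<le> f x"
    have "x \<in> S" using x by (simp add: S'_def)
    then obtain t where t: "t \<in> S" "f t = m" using Suc.prems(3) m by meson
    show "\<exists>t\<in>S'. f t = m"
    proof (cases "t = s")
      case True
      then have "f x = m" using s x m t by (auto simp: S'_def)
      then show ?thesis using x by blast
    next
      case False then show ?thesis using t by (auto simp: S'_def)
    qed
  qed
  have IH: "(\<Sum>i=1..card S'. lam ^ i) \<le> (\<Sum>x\<in>S'. lam ^ f x)"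
  proof -
    have "finite S'" using Suc.prems(1) by (simp add: S'_def)
    moreover have "\<forall>s\<in>S'. f s \<ge> 1" using Suc.prems(2) by (simp add: S'_def)
    ultimately show ?thesis using Suc.hyps(1)[OF cS' _ _ h3 Suc.prems(4) Suc.prems(5)] by blast
  qed
  have "{1..f s} \<subseteq> f ` S"
  proof
    fix m assume "m \<in> {1..f s}"
    then have "1 \<le> m \<and> m \<le> f s" by simp
    then obtain t where "t \<in> S" "f t = m" using Suc.prems(3) s(1) by meson
    then show "m \<in> f ` S" by (metis image_eqI)
  qed
  then have "card {1..f s} \<le> card (f ` S)" using Suc.prems(1) by (intro card_mono) simp_all
  also have "\<dots> \<le> card S" using Suc.prems(1) by (rule card_image_le)
  finally have fs: "f s \<le> card S" by simp
  have "(\<Sum>i=1..card S. lam ^ i) = (\<Sum>i=1..card S'. lam ^ i) + lam ^ card S"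
  proof -
    have cs: "card S = Suc (card S')" using Suc.hyps(2) cS' by simp
    show ?thesis unfolding cs by (rule sum_pow_Suc)
  qed
  also have "\<dots> \<le> (\<Sum>x\<in>S'. lam ^ f x) + lam ^ f s"
    using IH power_decreasing[OF fs Suc.prems(4) Suc.prems(5)] by (rule add_mono)
  also have "\<dots> = (\<Sum>x\<in>S. lam ^ f x)"
    using sum.remove[OF Suc.prems(1) s(1), of "\<lambda>x. lam ^ f x"] unfolding S'_def by simp
  finally show ?case .
qed

lemma bound_eq:
  fixes lam :: real
  assumes "lam \<noteq> 1" "n \<ge> 1"
  shows "(lam ^ n - lam) / (lam - 1) = (\<Sum>i=1..n-1. lam ^ i)"
  using assms(2)
proof (induction n rule: dec_induct)
  case base then show ?case by simp
next
  case (step n)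
  have "(\<Sum>i=1..Suc n - 1. lam ^ i) = (\<Sum>i=1..n-1. lam ^ i) + lam ^ n"
    using step.hyps by (cases n) auto
  also have "\<dots> = (lam ^ n - lam) / (lam - 1) + lam ^ n" using step.IH by simp
  also have "\<dots> = (lam ^ Suc n - lam) / (lam - 1)"
    using assms(1) by (simp add: field_simps)
  finally show ?case by simp
qed



lemma edge_cover:
  assumes G: "finite V \<and> (\<forall>u v. E u v \<longrightarrow> E v u)" and C: "connected_graph V E"
    and k: "k \<in> V" and l: "l \<in> V" and kl: "k \<noteq> l" and u: "u = k \<or> u = l"
  shows "real (nsp V E k l) \<le> (\<Sum>v\<in>{v\<in>V. E u v}. real (nsp_edge V E k l u v))"
proof -
  have fin: "finite V" and sym: "\<forall>u v. E u v \<longrightarrow> E v u" using G by (auto simp: simple_graph_def)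
  have wne: "walks_betw V E k l \<noteq> {}" using C k l by (auto simp: connected_graph_def)
  let ?SP = "shortest_paths V E k l"
  let ?N = "{v\<in>V. E u v}"
  have finN: "finite ?N" using fin by simp
  have sub: "?SP \<subseteq> (\<Union>v\<in>?N. {p \<in> ?SP. uses_edge p u v})"
  proof
    fix p assume p: "p \<in> ?SP"
    have pw: "walk V E p" "hd p = k" "last p = l" "length p = Suc (gdist V E k l)"
      using p by (auto simp: shortest_paths_def walks_betw_def)
    have d1: "gdist V E k l \<ge> 1" using gdist_pos[OF wne kl] .
    have ne: "p \<noteq> []" using pw by auto
    have h0: "p ! 0 = k" using pw ne by (simp add: hd_conv_nth)
    have hl: "p ! (length p - 1) = l" using pw ne by (simp add: last_conv_nth)
    have pV: "set p \<subseteq> V" using pw by (simp add: walk_def)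
    show "p \<in> (\<Union>v\<in>?N. {p \<in> ?SP. uses_edge p u v})"
    proof (cases "u = k")
      case True
      have e: "E (p ! 0) (p ! Suc 0)" using pw d1 by (auto simp: walk_def)
      have "p ! Suc 0 \<in> set p" using pw d1 by (intro nth_mem) simp
      then have "p ! Suc 0 \<in> V" using pV by blast
      moreover have "uses_edge p u (p ! Suc 0)"
        unfolding uses_edge_def using True h0 pw d1 by (intro exI[of _ 0]) auto
      ultimately show ?thesis using p e True h0 by auto
    next
      case False
      then have ul: "u = l" using u by simp
      define i where "i = length p - 2"
      have i: "i < length p - 1" "Suc i = length p - 1" using pw d1 by (auto simp: i_def)
      have e: "E (p ! i) (p ! Suc i)" using pw(1) i(1) unfolding walk_def by blast
      have "p ! i \<in> set p" using i by (intro nth_mem) simp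
      then have "p ! i \<in> V" using pV by blast
      moreover have "uses_edge p u (p ! i)"
        unfolding uses_edge_def using ul hl i by (intro exI[of _ i]) auto
      moreover have "E u (p ! i)" using e sym hl i ul by metis
      ultimately show ?thesis using p by auto
    qed
  qed
  have "card ?SP \<le> card (\<Union>v\<in>?N. {p \<in> ?SP. uses_edge p u v})"
    using finN finite_sp[OF fin] by (intro card_mono[OF _ sub]) auto
  also have "\<dots> \<le> (\<Sum>v\<in>?N. card {p \<in> ?SP. uses_edge p u v})"
    by (rule card_UN_le[OF finN])
  finally have "card ?SP \<le> (\<Sum>v\<in>?N. nsp_edge V E k l u v)"
    by (simp add: nsp_edge_def)
  then show ?thesis unfolding nsp_def
    by (simp only: of_nat_sum[symmetric] of_nat_le_iff)
qed

lemma lower_vertex: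
  fixes lam :: real
  assumes lam: "0 < lam" "lam < 1"
    and G: "finite V \<and> (\<forall>u v. E u v \<longrightarrow> E v u)" and C: "connected_graph V E" and u: "u \<in> V"
  shows "(\<Sum>i=1..card V - 1. lam ^ i) \<le> exp_betw_centrality V E lam u"
proof -
  have fin: "finite V" and sym: "\<forall>u v. E u v \<longrightarrow> E v u" using G by (auto simp: simple_graph_def)
  have wne: "\<And>k l. k \<in> V \<Longrightarrow> l \<in> V \<Longrightarrow> walks_betw V E k l \<noteq> {}"
    using C by (auto simp: connected_graph_def)
  define P where "P = {(k,l). k \<in> V \<and> l \<in> V \<and> k < l}"
  define N where "N = {v\<in>V. E u v}"
  define Pu where "Pu = {x \<in> P. fst x = u \<or> snd x = u}"
  define F where "F = (\<lambda>x v. real (nsp_edge V E (fst x) (snd x) u v) / real (nsp V E (fst x) (snd x))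
        * lam ^ gdist V E (fst x) (snd x))"
  have finP: "finite P" unfolding P_def
    by (rule finite_subset[of _ "V \<times> V"]) (auto simp: fin)
  have finN: "finite N" using fin by (simp add: N_def)
  have "exp_betw_centrality V E lam u = (\<Sum>v\<in>N. \<Sum>x\<in>P. F x v)"
    unfolding exp_betw_centrality_def exp_edge_betw_def N_def P_def F_def
    by (simp add: case_prod_beta)
  also have "\<dots> = (\<Sum>x\<in>P. \<Sum>v\<in>N. F x v)" by (rule sum.swap)
  also have "\<dots> \<ge> (\<Sum>x\<in>Pu. \<Sum>v\<in>N. F x v)"
    by (rule sum_mono2[OF finP]) (auto simp: Pu_def F_def intro!: sum_nonneg mult_nonneg_nonneg divide_nonneg_nonneg zero_le_power lam(1)[THEN less_imp_le])
  moreover have "(\<Sum>x\<in>Pu. \<Sum>v\<in>N. F x v) \<ge> (\<Sum>x\<in>Pu. lam ^ gdist V E (fst x) (snd x))"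
  proof (rule sum_mono)
    fix x assume x: "x \<in> Pu"
    obtain k l where xkl: "x = (k,l)" by (cases x)
    have k: "k \<in> V" and l: "l \<in> V" and kl: "k \<noteq> l" and uu: "u = k \<or> u = l"
      using x by (auto simp: Pu_def P_def xkl)
    have pos: "real (nsp V E k l) > 0" using nsp_pos[OF fin wne[OF k l]] by simp
    have cov: "real (nsp V E k l) \<le> (\<Sum>v\<in>N. real (nsp_edge V E k l u v))"
      unfolding N_def by (rule edge_cover[OF G C k l kl uu])
    have "(\<Sum>v\<in>N. F x v) = lam ^ gdist V E k l * ((\<Sum>v\<in>N. real (nsp_edge V E k l u v)) / real (nsp V E k l))"
      by (simp add: F_def xkl sum_distrib_left sum_divide_distrib mult.commute)
    also have "\<dots> \<ge> lam ^ gdist V E k l * 1"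
      using cov pos lam by (intro mult_left_mono) (auto simp: le_divide_eq)
    finally show "lam ^ gdist V E (fst x) (snd x) \<le> (\<Sum>v\<in>N. F x v)" by (simp add: xkl)
  qed
  moreover have "(\<Sum>x\<in>Pu. lam ^ gdist V E (fst x) (snd x)) = (\<Sum>l\<in>V-{u}. lam ^ gdist V E u l)"
  proof (rule sum.reindex_bij_witness[of _ "\<lambda>l. (min u l, max u l)" "\<lambda>x. if fst x = u then snd x else fst x"])
    fix x assume "x \<in> Pu"
    then show "(min u (if fst x = u then snd x else fst x), max u (if fst x = u then snd x else fst x)) = x"
      by (auto simp: Pu_def P_def min_def max_def)
  next
    fix x assume "x \<in> Pu"
    then show "(if fst x = u then snd x else fst x) \<in> V - {u}"
      by (auto simp: Pu_def P_def)
  next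
    fix l assume "l \<in> V - {u}"
    then show "(if fst (min u l, max u l) = u then snd (min u l, max u l) else fst (min u l, max u l)) = l"
      by (auto simp: min_def max_def)
  next
    fix l assume "l \<in> V - {u}"
    then show "(min u l, max u l) \<in> Pu"
      using u by (auto simp: Pu_def P_def min_def max_def)
  next
    fix x assume x: "x \<in> Pu"
    show "lam ^ gdist V E u (if fst x = u then snd x else fst x) = lam ^ gdist V E (fst x) (snd x)"
    proof (cases "fst x = u")
      case True then show ?thesis by simp
    next
      case False
      then have "snd x = u" using x by (auto simp: Pu_def)
      then show ?thesis using False gdist_sym[OF sym, where k=u and l="fst x" and V=V] by simp
    qed
  qed
  moreover have "(\<Sum>i=1..card (V-{u}). lam ^ i) \<le> (\<Sum>l\<in>V-{u}. lam ^ gdist V E u l)"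
  proof (rule level_sum)
    show "finite (V - {u})" using fin by simp
    show "\<forall>s\<in>V - {u}. 1 \<le> gdist V E u s"
      using gdist_pos[OF wne[OF u]] by auto
    show "0 \<le> lam" "lam \<le> 1" using lam by auto
    show "\<forall>s\<in>V - {u}. \<forall>m. 1 \<le> m \<and> m \<le> gdist V E u s \<longrightarrow> (\<exists>t\<in>V - {u}. gdist V E u t = m)"
    proof (intro ballI allI impI)
      fix s m assume s: "s \<in> V - {u}" and m: "1 \<le> m \<and> m \<le> gdist V E u s"
      obtain p where p: "p \<in> walks_betw V E u s" "length p = Suc (gdist V E u s)"
        using gdist_ex[OF wne[OF u, of s]] s by blast
      then have psp: "p \<in> shortest_paths V E u s" by (simp add: shortest_paths_def)
      have g: "gdist V E u (p ! m) = m" "p ! m \<in> V" using gdist_prefix[OF psp] m by auto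
      have "p ! m \<noteq> u" using g m gdist_self[OF u] by auto
      then show "\<exists>t\<in>V - {u}. gdist V E u t = m" using g by blast
    qed
  qed
  moreover have "card (V - {u}) = card V - 1" using fin u by simp
  then have "(\<Sum>i=1..card V - 1. lam ^ i) = (\<Sum>i=1..card (V-{u}). lam ^ i)" by simp
  ultimately show ?thesis by linarith
qed




lemma path_sym: "\<forall>u v. path_adj u v \<longrightarrow> path_adj v u"
  by (auto simp: path_adj_def)

lemma path_walk_upt: "k \<le> l \<Longrightarrow> l < n \<Longrightarrow> [k..<Suc l] \<in> walks_betw {0..<n} path_adj k l"
  using walk_upt[of k l n] by (simp add: walks_betw_def hd_upt del: upt_Suc)

lemma path_conn: "n \<ge> 1 \<Longrightarrow> connected_graph {0..<n} path_adj"
  unfolding connected_graph_def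
proof (intro conjI ballI)
  fix k l assume n: "n \<ge> 1" and k: "k \<in> {0..<n}" and l: "l \<in> {0..<n}"
  show "walks_betw {0..<n} path_adj k l \<noteq> {}"
  proof (cases "k \<le> l")
    case True then show ?thesis using path_walk_upt[of k l n] l by auto
  next
    case False
    then have "[l..<Suc k] \<in> walks_betw {0..<n} path_adj l k" using path_walk_upt[of l k n] k by auto
    then have "rev [l..<Suc k] \<in> walks_betw {0..<n} path_adj k l"
      using walk_rev[OF path_sym] by (auto simp: walks_betw_def hd_rev last_rev)
    then show ?thesis by blast
  qed
qed auto

lemma path_lip:
  assumes w: "walk {0..<n} path_adj p" and ij: "i \<le> j" "j < length p"
  shows "p ! j \<le> p ! i + (j - i) \<and> p ! i \<le> p ! j + (j - i)"
  using ij
proof (induction j rule: dec_induct)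
  case base then show ?case by simp
next
  case (step j)
  have "path_adj (p ! j) (p ! Suc j)" using w step.prems by (auto simp: walk_def)
  then show ?case using step by (auto simp: path_adj_def)
qed

lemma path_sp_facts:
  assumes p: "p \<in> shortest_paths {0..<n} path_adj k l"
  shows "walk {0..<n} path_adj p" "p ! 0 = k" "p ! (length p - 1) = l"
    "length p = Suc (gdist {0..<n} path_adj k l)"
proof -
  have pw: "walk {0..<n} path_adj p" "hd p = k" "last p = l" "length p = Suc (gdist {0..<n} path_adj k l)"
    using p by (auto simp: shortest_paths_def walks_betw_def)
  then have ne: "p \<noteq> []" by auto
  show "walk {0..<n} path_adj p" "p ! 0 = k" "p ! (length p - 1) = l"
    "length p = Suc (gdist {0..<n} path_adj k l)"
    using pw ne by (auto simp: hd_conv_nth last_conv_nth)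
qed

lemma path_gdist:
  assumes "k \<le> l" "l < n"
  shows "gdist {0..<n} path_adj k l = l - k"
proof (rule antisym)
  show "gdist {0..<n} path_adj k l \<le> l - k"
    using gdist_le[OF path_walk_upt[OF assms]] assms by simp
  obtain p where p: "p \<in> walks_betw {0..<n} path_adj k l" "length p = Suc (gdist {0..<n} path_adj k l)"
  proof -
    have "walks_betw {0..<n} path_adj k l \<noteq> {}" using path_walk_upt[OF assms] by blast
    from gdist_ex[OF this] show ?thesis using that by blast
  qed
  then have psp: "p \<in> shortest_paths {0..<n} path_adj k l" by (simp add: shortest_paths_def)
  note f = path_sp_facts[OF psp]
  have "p ! (length p - 1) \<le> p ! 0 + (length p - 1 - 0)"
    using path_lip[OF f(1), of 0 "length p - 1"] f(4) by simp
  then show "l - k \<le> gdist {0..<n} path_adj k l" using f by simp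
qed

lemma path_no_edge:
  assumes k: "1 \<le> k" "k < l" "l < n"
  shows "nsp_edge {0..<n} path_adj k l 0 1 = 0"
proof -
  have "{p \<in> shortest_paths {0..<n} path_adj k l. uses_edge p 0 1} = {}"
  proof (rule ccontr)
    assume "\<not> ?thesis"
    then obtain p where psp: "p \<in> shortest_paths {0..<n} path_adj k l" and ue: "uses_edge p 0 1" by auto
    note f = path_sp_facts[OF psp]
    have d: "gdist {0..<n} path_adj k l = l - k" using path_gdist k by simp
    obtain j where j: "j < length p" "p ! j = 0"
    proof -
      obtain i where i: "i < length p - 1" "(p ! i = 0 \<and> p ! Suc i = 1) \<or> (p ! i = 1 \<and> p ! Suc i = 0)"
        using ue unfolding uses_edge_def by blast
      show ?thesis
      proof (cases "p ! i = 0")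
        case True then show ?thesis using i that[of i] by simp
      next
        case False then show ?thesis using i that[of "Suc i"] by simp
      qed
    qed
    have "p ! j \<le> p ! 0 + (j - 0) \<and> p ! 0 \<le> p ! j + (j - 0)" using path_lip[OF f(1), of 0 j] j by simp
    then have "k \<le> j" using f j by simp
    have "p ! (length p - 1) \<le> p ! j + (length p - 1 - j)" using path_lip[OF f(1), of j "length p - 1"] j by simp
    then have "l \<le> length p - 1 - j" using f j by simp
    then show False using \<open>k \<le> j\<close> f(4) d k by simp
  qed
  then show ?thesis unfolding nsp_edge_def by (metis card.empty)
qed



lemma path_upper:
  fixes lam :: real
  assumes lam: "0 < lam" "lam < 1" and n: "n \<ge> 1"
  shows "exp_betw_centrality {0..<n} path_adj lam 0 \<le> (\<Sum>i=1..n-1. lam ^ i)"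
proof (cases "n = 1")
  case True
  then have "{v \<in> {0..<n}. path_adj 0 v} = {}" by (auto simp: path_adj_def)
  then have "exp_betw_centrality {0..<n} path_adj lam 0 = 0" unfolding exp_betw_centrality_def by (metis sum.empty)
  then show ?thesis using True by simp
next
  case False
  then have n2: "n \<ge> 2" using n by simp
  let ?V = "{0..<n}"
  have N: "{v \<in> ?V. path_adj 0 v} = {1}" using n2 by (auto simp: path_adj_def)
  define P where "P = {(k,l). k \<in> ?V \<and> l \<in> ?V \<and> k < l}"
  define G where "G = (\<lambda>x. real (nsp_edge ?V path_adj (fst x) (snd x) 0 1) / real (nsp ?V path_adj (fst x) (snd x))
        * lam ^ gdist ?V path_adj (fst x) (snd x))"
  define H where "H = (\<lambda>x::nat\<times>nat. if fst x = 0 then lam ^ snd x else 0)"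
  have finP: "finite P" unfolding P_def by (rule finite_subset[of _ "?V \<times> ?V"]) auto
  have "exp_betw_centrality ?V path_adj lam 0 = (\<Sum>x\<in>P. G x)"
    unfolding exp_betw_centrality_def N exp_edge_betw_def P_def G_def
    by (simp add: case_prod_beta)
  also have "\<dots> \<le> (\<Sum>x\<in>P. H x)"
  proof (rule sum_mono)
    fix x assume x: "x \<in> P"
    obtain k l where xkl: "x = (k,l)" by (cases x)
    have kl: "k < l" "l < n" using x by (auto simp: P_def xkl)
    show "G x \<le> H x"
    proof (cases "k = 0")
      case False
      then show ?thesis using path_no_edge[of k l n] kl by (simp add: G_def H_def xkl)
    next
      case True
      have d: "gdist ?V path_adj 0 l = l" using path_gdist[of 0 l n] kl by simp
      have "nsp_edge ?V path_adj 0 l 0 1 \<le> nsp ?V path_adj 0 l"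
        unfolding nsp_edge_def nsp_def by (rule card_mono[OF finite_sp]) auto
      then have r: "real (nsp_edge ?V path_adj 0 l 0 1) / real (nsp ?V path_adj 0 l) \<le> 1"
        by (cases "nsp ?V path_adj 0 l = 0") (auto simp: divide_le_eq_1)
      have "G x = real (nsp_edge ?V path_adj 0 l 0 1) / real (nsp ?V path_adj 0 l) * lam ^ l"
        by (simp add: G_def xkl True d)
      also have "\<dots> \<le> lam ^ l"
        using r lam by (intro mult_left_le_one_le) auto
      finally show ?thesis by (simp add: H_def xkl True)
    qed
  qed
  also have "(\<Sum>x\<in>P. H x) = (\<Sum>x\<in>{x\<in>P. fst x = 0}. lam ^ snd x)"
    unfolding H_def by (simp add: sum.inter_filter[OF finP])
  also have "{x\<in>P. fst x = 0} = (\<lambda>l. (0,l)) ` {1..<n}"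
    by (auto simp: P_def image_iff)
  also have "(\<Sum>x\<in>(\<lambda>l. (0::nat,l)) ` {1..<n}. lam ^ snd x) = (\<Sum>l\<in>{1..<n}. lam ^ l)"
    by (subst sum.reindex) (auto simp: inj_on_def)
  also have "{1..<n} = {1..n-1}" using n by auto
  finally show ?thesis .
qed

theorem theorem6:
  fixes lam :: real and V :: "'a::linorder set" and E :: "'a \<Rightarrow> 'a \<Rightarrow> bool"
  assumes "0 < lam" and "lam < 1"
    and "simple_graph V E" and "connected_graph V E"
  shows "(lam ^ card V - lam) / (lam - 1) \<le> min_exp_betw_centrality V E lam
    \<and> (\<forall>n::nat. n \<ge> 1 \<longrightarrow>
          exp_betw_centrality {0..<n} path_adj lam 0 = (lam ^ n - lam) / (lam - 1)
        \<and> min_exp_betw_centrality {0..<n} path_adj lam = (lam ^ n - lam) / (lam - 1))"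
proof -
  have gen: "(lam ^ card W - lam) / (lam - 1) \<le> min_exp_betw_centrality W F lam"
    if fw: "finite W \<and> (\<forall>u v. F u v \<longrightarrow> F v u)" and cw: "connected_graph W F"
    for W :: "'b::linorder set" and F
  proof -
    have ne: "W \<noteq> {}" using cw by (simp add: connected_graph_def)
    have fin: "finite W" using fw by simp
    have c1: "card W \<ge> 1" using ne fin by (simp add: Suc_leI card_gt_0_iff)
    have b: "(lam ^ card W - lam) / (lam - 1) = (\<Sum>i=1..card W - 1. lam ^ i)"
      using bound_eq[OF _ c1, of lam] assms(2) by simp
    show ?thesis unfolding min_exp_betw_centrality_def b
      using fin ne lower_vertex[OF assms(1,2) fw cw] by (simp add: Min_ge_iff)
  qed
  have part1: "(lam ^ card V - lam) / (lam - 1) \<le> min_exp_betw_centrality V E lam"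
    using assms(3,4) by (intro gen) (auto simp: simple_graph_def)
  have part2: "exp_betw_centrality {0..<n} path_adj lam 0 = (lam ^ n - lam) / (lam - 1)
        \<and> min_exp_betw_centrality {0..<n} path_adj lam = (lam ^ n - lam) / (lam - 1)"
    if n: "n \<ge> 1" for n :: nat
  proof -
    have fw: "finite {0..<n} \<and> (\<forall>u v. path_adj u v \<longrightarrow> path_adj v u)" using path_sym by simp
    have cw: "connected_graph {0..<n} path_adj" using path_conn[OF n] .
    have b: "(lam ^ n - lam) / (lam - 1) = (\<Sum>i=1..n - 1. lam ^ i)"
      using bound_eq[OF _ n, of lam] assms(2) by simp
    have lo: "(\<Sum>i=1..n - 1. lam ^ i) \<le> exp_betw_centrality {0..<n} path_adj lam 0"
      using lower_vertex[OF assms(1,2) fw cw, of 0] n by simp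
    have up: "exp_betw_centrality {0..<n} path_adj lam 0 \<le> (\<Sum>i=1..n - 1. lam ^ i)"
      using path_upper[OF assms(1,2) n] .
    have m1: "min_exp_betw_centrality {0..<n} path_adj lam \<le> exp_betw_centrality {0..<n} path_adj lam 0"
      unfolding min_exp_betw_centrality_def using n by (intro Min_le) auto
    have m2: "(lam ^ n - lam) / (lam - 1) \<le> min_exp_betw_centrality {0..<n} path_adj lam"
      using gen[OF fw cw] by simp
    show ?thesis using lo up m1 m2 b by linarith
  qed
  show ?thesis using part1 part2 by blast
qed


end
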